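(* Let $w$ be well-ordering on an interval $I$, $n\in\mathbb N$, and $A\subset\{1,\dots,2n\}$ with $|A|=n$ and $\max f_A\ge1$. Let $\ell_1<\dots<\ell_m$ be the integers $k\in\{1,\dots,2n\}$ with $f_A(k)=\max f_A$ (so $\ell_m<2n$), and set $B(A)=\big(A\cup\{\ell_j+1\}_{j=1}^m\big)\setminus\{\ell_j\}_{j=1}^m$. If $\mathrm{Osc}(f_A)\ge2$, then $\mathrm{Osc}(f_{B(A)})<\mathrm{Osc}(f_A)$. Moreover, for all $x_1\le x_2\le\dots\le x_{2n}$ in $I$, $c_n(x_{B(A)})+c_n(x_{B(A)^c})\le c_n(x_A)+c_n(x_{A^c}),$ and if $w$ is strictly well-ordering and $c_n(x_{B(A)})+c_n(x_{B(A)^c})<\infty$, equality holds if and only if $\sum_{k\in A}\delta_{x_k}=\sum_{k\in B(A)}\delta_{x_k}$ or $\sum_{k\in A}\delta_{x_k}=\sum_{k\in B(A)^c}\delta_{x_k}$.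
   Context: For $A\subset\{1,\dots,2n\}$ with $|A|=n$: $A^c=\{1,\dots,2n\}\setminus A$, $\mu_A=\sum_{j\in A}\delta_j-\sum_{j\in A^c}\delta_j$, $f_A(t)=\mu_A([0,t])$ for $t\in\mathbb R$ (the cumulative function; integer-valued, vanishes for $t<1$ and $t\ge2n$), and $\mathrm{Osc}(f_A)=\max f_A-\min f_A$. $c_n(y)=\sum_{i\ne j}w(y_i,y_j)$; $x_B=(x_{b})_{b\in B}$ in increasing order of indices. Well-ordering: $w$ continuous symmetric with, for $y_1\le y_2\le y_3\le y_4$ in $I$, $w(y_1,y_3)+w(y_2,y_4)=\min_\sigma[w(y_{\sigma(1)},y_{\sigma(2)})+w(y_{\sigma(3)},y_{\sigma(4)})]$ over permutations of $\{1,2,3,4\}$; strictly well-ordering: equality for a given $\sigma$ only if the sum is $\infty$ or $\delta_{y_1}+\delta_{y_3}\in\{\delta_{y_{\sigma(1)}}+\delta_{y_{\sigma(2)}},\delta_{y_{\sigma(3)}}+\delta_{y_{\sigma(4)}}\}$. *)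

theory Defs
  imports "HOL-Analysis.Analysis" "HOL-Combinatorics.Permutations" "HOL-Library.Multiset"
begin

text \<open>Weights take values in extended reals (the paper allows the value infinity).\<close>

definition well_ordering :: "real set \<Rightarrow> (real \<Rightarrow> real \<Rightarrow> ereal) \<Rightarrow> bool" where
  "well_ordering I w \<longleftrightarrow>
     continuous_on (I \<times> I) (\<lambda>p. w (fst p) (snd p)) \<and>
     (\<forall>a\<in>I. \<forall>b\<in>I. w a b = w b a) \<and>
     (\<forall>y::nat \<Rightarrow> real. (\<forall>i\<in>{1..4}. y i \<in> I) \<and> y 1 \<le> y 2 \<and> y 2 \<le> y 3 \<and> y 3 \<le> y 4 \<longrightarrow>
        w (y 1) (y 3) + w (y 2) (y 4) =
        Min {w (y (\<sigma> 1)) (y (\<sigma> 2)) + w (y (\<sigma> 3)) (y (\<sigma> 4)) | \<sigma>. \<sigma> permutes {1..4::nat}})"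

definition strictly_well_ordering :: "real set \<Rightarrow> (real \<Rightarrow> real \<Rightarrow> ereal) \<Rightarrow> bool" where
  "strictly_well_ordering I w \<longleftrightarrow> well_ordering I w \<and>
     (\<forall>y::nat \<Rightarrow> real. \<forall>\<sigma>. (\<forall>i\<in>{1..4}. y i \<in> I) \<and> y 1 \<le> y 2 \<and> y 2 \<le> y 3 \<and> y 3 \<le> y 4
        \<and> \<sigma> permutes {1..4::nat} \<and>
        w (y 1) (y 3) + w (y 2) (y 4) = w (y (\<sigma> 1)) (y (\<sigma> 2)) + w (y (\<sigma> 3)) (y (\<sigma> 4))
        \<longrightarrow> w (y 1) (y 3) + w (y 2) (y 4) = \<infinity> \<or>
            {#y 1, y 3#} \<in> {{#y (\<sigma> 1), y (\<sigma> 2)#}, {#y (\<sigma> 3), y (\<sigma> 4)#}})"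

definition cost :: "(real \<Rightarrow> real \<Rightarrow> ereal) \<Rightarrow> real list \<Rightarrow> ereal" where
  "cost w ys = (\<Sum>(i,j)\<in>{(i,j). i < length ys \<and> j < length ys \<and> i \<noteq> j}. w (ys ! i) (ys ! j))"

definition subvec :: "(nat \<Rightarrow> real) \<Rightarrow> nat set \<Rightarrow> real list" where
  "subvec x B = map x (sorted_list_of_set B)"

definition fcum :: "nat \<Rightarrow> nat set \<Rightarrow> real \<Rightarrow> int" where
  "fcum n A t = int (card {j\<in>A. real j \<le> t}) - int (card {j\<in>{1..2*n} - A. real j \<le> t})"

definition maxf :: "nat \<Rightarrow> nat set \<Rightarrow> int" where
  "maxf n A = Max (range (fcum n A))"

definition minf :: "nat \<Rightarrow> nat set \<Rightarrow> int" where
  "minf n A = Min (range (fcum n A))"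

definition osc :: "nat \<Rightarrow> nat set \<Rightarrow> int" where
  "osc n A = maxf n A - minf n A"

definition levels :: "nat \<Rightarrow> nat set \<Rightarrow> nat set" where
  "levels n A = {k \<in> {1..2*n}. fcum n A (real k) = maxf n A}"

definition BA :: "nat \<Rightarrow> nat set \<Rightarrow> nat set" where
  "BA n A = (A \<union> Suc ` levels n A) - levels n A"

end

theory Submission
  imports Defs
begin



definition offd :: "nat set \<Rightarrow> (nat \<times> nat) set" where
  "offd B = {(p,q). p \<in> B \<and> q \<in> B \<and> p \<noteq> q}"

lemma cost_subvec:
  assumes "finite B"
  shows "cost w (subvec x B) = (\<Sum>(p,q)\<in>offd B. w (x p) (x q))"
proof -
  define sl where "sl = sorted_list_of_set B"
  have d: "distinct sl" and s: "set sl = B" using assms by (auto simp: sl_def)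
  define h where "h = (\<lambda>(i,j). (sl ! i, sl ! j))"
  have bij: "bij_betw h {(i,j). i < length sl \<and> j < length sl \<and> i \<noteq> j} (offd B)"
  proof (rule bij_betw_imageI)
    show "inj_on h {(i,j). i < length sl \<and> j < length sl \<and> i \<noteq> j}"
      using d by (auto simp: inj_on_def h_def nth_eq_iff_index_eq)
    show "h ` {(i,j). i < length sl \<and> j < length sl \<and> i \<noteq> j} = offd B"
    proof
      show "h ` {(i,j). i < length sl \<and> j < length sl \<and> i \<noteq> j} \<subseteq> offd B"
        using d s by (auto simp: h_def offd_def nth_eq_iff_index_eq)
      show "offd B \<subseteq> h ` {(i,j). i < length sl \<and> j < length sl \<and> i \<noteq> j}"
      proof
        fix pq assume "pq \<in> offd B"
        then obtain p q where pq: "pq = (p,q)" "p \<in> set sl" "q \<in> set sl" "p \<noteq> q"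
          using s by (auto simp: offd_def)
        then obtain i j where "i < length sl" "j < length sl" "sl ! i = p" "sl ! j = q"
          by (metis in_set_conv_nth)
        then show "pq \<in> h ` {(i,j). i < length sl \<and> j < length sl \<and> i \<noteq> j}"
          using pq by (auto simp: h_def image_iff intro!: exI[of _ "(i,j)"])
      qed
    qed
  qed
  have "cost w (subvec x B) = (\<Sum>(i,j)\<in>{(i,j). i < length sl \<and> j < length sl \<and> i \<noteq> j}. w (x (sl ! i)) (x (sl ! j)))"
    unfolding cost_def subvec_def sl_def by (intro sum.cong) auto
  also have "\<dots> = (\<Sum>ij\<in>{(i,j). i < length sl \<and> j < length sl \<and> i \<noteq> j}. (\<lambda>(p,q). w (x p) (x q)) (h ij))"
    by (rule sum.cong) (auto simp: h_def)
  also have "\<dots> = (\<Sum>(p,q)\<in>offd B. w (x p) (x q))"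
    by (rule sum.reindex_bij_betw[OF bij])
  finally show ?thesis .
qed




lemma mset_subvec: "mset (subvec x B) = image_mset x (mset_set B)"
  by (simp add: subvec_def) (metis mset_sorted_list_of_multiset sorted_list_of_mset_set)

lemma cost_mset:
  assumes "mset ys = mset zs"
  shows "cost w ys = cost w zs"
proof -
  obtain p where p: "p permutes {..<length zs}" "permute_list p zs = ys"
    using mset_eq_permutation[OF assms] by blast
  have len: "length ys = length zs" using assms by (metis size_mset)
  define h where "h = (\<lambda>(i,j). (p i, p j))"
  let ?S = "{(i,j). i < length zs \<and> j < length zs \<and> i \<noteq> j}"
  have pin: "\<And>i. i < length zs \<Longrightarrow> p i < length zs"
    using p(1) permutes_in_image by fastforce
  have pinj: "\<And>i j. p i = p j \<longleftrightarrow> i = j"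
    using permutes_inj[OF p(1)] by (simp add: inj_eq)
  have bij: "bij_betw h ?S ?S"
  proof (rule bij_betw_imageI)
    show "inj_on h ?S" by (auto simp: inj_on_def h_def pinj)
    show "h ` ?S = ?S"
    proof
      show "h ` ?S \<subseteq> ?S" by (auto simp: h_def pin pinj)
      show "?S \<subseteq> h ` ?S"
      proof
        fix ij assume "ij \<in> ?S"
        then obtain i j where ij: "ij = (i,j)" "i < length zs" "j < length zs" "i \<noteq> j" by auto
        have pi: "\<And>k. p (inv p k) = k" using p(1) permutes_inverses(1) by metis
        have ii: "\<And>k. k < length zs \<Longrightarrow> inv p k < length zs"
          using permutes_inv[OF p(1)] permutes_in_image by fastforce
        have m1: "(inv p i, inv p j) \<in> ?S" using ij ii pi by (metis (mono_tags, lifting) case_prod_conv mem_Collect_eq)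
        have m2: "h (inv p i, inv p j) = ij" using ij pi by (simp add: h_def)
        show "ij \<in> h ` ?S" using image_eqI[where f=h, OF sym[OF m2] m1] .
      qed
    qed
  qed
  have "cost w ys = (\<Sum>ij\<in>?S. (\<lambda>(i,j). w (zs ! i) (zs ! j)) (h ij))"
    unfolding cost_def len
  proof (rule sum.cong)
    fix ij assume "ij \<in> ?S"
    then obtain i j where "ij = (i,j)" "i < length zs" "j < length zs" by auto
    then show "(\<lambda>(i,j). w (ys ! i) (ys ! j)) ij = (\<lambda>(i,j). w (zs ! i) (zs ! j)) (h ij)"
      by (simp add: h_def p(2)[symmetric] permute_list_nth[OF p(1)])
  qed simp
  also have "\<dots> = cost w zs" unfolding cost_def by (rule sum.reindex_bij_betw[OF bij])
  finally show ?thesis .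
qed




lemma ereal_add_eq_cases:
  fixes u v u' v' :: ereal
  assumes "u \<le> u'" "v \<le> v'" "u + v = u' + v'" "u' + v' \<noteq> \<infinity>" "u \<noteq> -\<infinity>" "v \<noteq> -\<infinity>"
  shows "u = u' \<and> v = v'"
  using assms by (cases u; cases v; cases u'; cases v') auto

lemma sum_ninf:
  fixes f :: "'a \<Rightarrow> ereal"
  assumes "\<And>x. x \<in> A \<Longrightarrow> f x \<noteq> -\<infinity>"
  shows "sum f A \<noteq> -\<infinity>"
  using assms
proof (induction A rule: infinite_finite_induct)
  case (insert x F)
  then show ?case by simp
qed auto

lemma match_lemma:
  fixes S P :: "nat set" and \<kappa> :: "nat \<Rightarrow> nat" and a b :: "nat \<Rightarrow> ereal" and x :: "nat \<Rightarrow> real"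
  assumes "finite S" "inj_on \<kappa> S"
    and "\<And>c. card ({r\<in>S. c \<le> \<kappa> r} - P) \<le> card ({r\<in>S. c \<le> \<kappa> r} \<inter> P)"
    and "card (S - P) = card (S \<inter> P)"
    and "\<And>p q. p \<in> S - P \<Longrightarrow> q \<in> S \<inter> P \<Longrightarrow> \<kappa> p < \<kappa> q \<Longrightarrow> a p + b q \<le> a q + b p"
    and "\<And>p. p \<in> S \<Longrightarrow> a p \<noteq> -\<infinity> \<and> b p \<noteq> -\<infinity>"
  shows "sum b (S\<inter>P) + sum a (S-P) \<le> sum a (S\<inter>P) + sum b (S-P) \<and>
     ((\<forall>p q. p \<in> S - P \<longrightarrow> q \<in> S \<inter> P \<longrightarrow> \<kappa> p < \<kappa> q \<longrightarrow> a p + b q = a q + b p \<longrightarrow> a q + b p \<noteq> \<infinity> \<longrightarrow> x p = x q) \<longrightarrow>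
      sum b (S\<inter>P) + sum a (S-P) = sum a (S\<inter>P) + sum b (S-P) \<longrightarrow> sum a (S\<inter>P) + sum b (S-P) \<noteq> \<infinity> \<longrightarrow>
      image_mset x (mset_set (S\<inter>P)) = image_mset x (mset_set (S-P)))"
  using assms
proof (induction "card S" arbitrary: S rule: less_induct)
  case less
  note fin = less.prems(1) and inj = less.prems(2) and suf = less.prems(3) and tot = less.prems(4)
    and pair = less.prems(5) and ninf = less.prems(6)
  show ?case
  proof (cases "S = {}")
    case True then show ?thesis by simp
  next
    case False
    have ne: "S \<inter> P \<noteq> {}"
    proof
      assume "S \<inter> P = {}"
      then have "card (S - P) = 0" using tot by simp
      then have "S - P = {}" using fin by simp
      with \<open>S \<inter> P = {}\<close> False show False by blast
    qed
    define kq where "kq = Min (\<kappa> ` (S\<inter>P))"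
    have "kq \<in> \<kappa> ` (S\<inter>P)" unfolding kq_def using fin ne by (intro Min_in) auto
    then obtain q where q: "q \<in> S \<inter> P" "\<kappa> q = kq" by auto
    have qmin: "\<And>r. r \<in> S \<inter> P \<Longrightarrow> \<kappa> q \<le> \<kappa> r" using q fin unfolding kq_def by simp
    define km where "km = Min (\<kappa> ` S)"
    have "km \<in> \<kappa> ` S" unfolding km_def using fin False by (intro Min_in) auto
    then obtain m where m: "m \<in> S" "\<kappa> m = km" by auto
    have mmin: "\<And>r. r \<in> S \<Longrightarrow> \<kappa> m \<le> \<kappa> r" using m fin unfolding km_def by simp
    have mP: "m \<notin> P"
    proof
      assume mP: "m \<in> P"
      have Q: "{r\<in>S. Suc (\<kappa> m) \<le> \<kappa> r} = S - {m}"
      proof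
        show "{r\<in>S. Suc (\<kappa> m) \<le> \<kappa> r} \<subseteq> S - {m}" by auto
        show "S - {m} \<subseteq> {r\<in>S. Suc (\<kappa> m) \<le> \<kappa> r}"
        proof
          fix r assume r: "r \<in> S - {m}"
          then have "\<kappa> r \<noteq> \<kappa> m" using inj m(1) by (auto dest: inj_onD)
          with mmin[of r] r show "r \<in> {r\<in>S. Suc (\<kappa> m) \<le> \<kappa> r}" by auto
        qed
      qed
      have "card ((S - {m}) - P) \<le> card ((S - {m}) \<inter> P)" using suf[of "Suc (\<kappa> m)"] Q by simp
      moreover have "(S - {m}) - P = S - P" using mP by auto
      moreover have "(S - {m}) \<inter> P = (S \<inter> P) - {m}" by auto
      moreover have "card ((S \<inter> P) - {m}) = card (S \<inter> P) - 1" using mP m(1) fin by simp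
      moreover have "card (S \<inter> P) \<ge> 1" using ne fin by (simp add: Suc_le_eq card_gt_0_iff)
      ultimately show False using tot by simp
    qed
    have mq: "\<kappa> m < \<kappa> q"
    proof -
      have "m \<noteq> q" using mP q by auto
      then have "\<kappa> m \<noteq> \<kappa> q" using inj m(1) q(1) by (auto dest: inj_onD)
      with mmin[of q] q show ?thesis by auto
    qed
    define T where "T = {r\<in>S. \<kappa> r < \<kappa> q}"
    have mT: "m \<in> T" using m mq by (simp add: T_def)
    have finT: "finite T" using fin by (simp add: T_def)
    define kp where "kp = Max (\<kappa> ` T)"
    have "kp \<in> \<kappa> ` T" unfolding kp_def using finT mT by (intro Max_in) auto
    then obtain p where p: "p \<in> T" "\<kappa> p = kp" by auto
    have pmax: "\<And>r. r \<in> T \<Longrightarrow> \<kappa> r \<le> \<kappa> p" using p finT unfolding kp_def by simp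
    have pS: "p \<in> S" and pq: "\<kappa> p < \<kappa> q" using p by (auto simp: T_def)
    have pP: "p \<notin> P" using qmin[of p] pS pq by auto
    have betw: "\<And>r. r \<in> S \<Longrightarrow> \<kappa> p < \<kappa> r \<Longrightarrow> \<kappa> r < \<kappa> q \<Longrightarrow> False"
      using pmax by (fastforce simp: T_def)
    have pneq: "p \<noteq> q" using pq by auto
    define S' where "S' = S - {p,q}"
    have "S' \<subset> S" using pS by (auto simp: S'_def)
    then have cardS': "card S' < card S" using fin by (rule psubset_card_mono[rotated])
    have finS': "finite S'" using fin by (simp add: S'_def)
    have injS': "inj_on \<kappa> S'" using inj by (auto simp: S'_def intro: inj_on_subset)
    have S'P: "S' \<inter> P = (S \<inter> P) - {q}" using pP by (auto simp: S'_def)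
    have S'nP: "S' - P = (S - P) - {p}" using q by (auto simp: S'_def)
    have sufS': "card ({r\<in>S'. c \<le> \<kappa> r} - P) \<le> card ({r\<in>S'. c \<le> \<kappa> r} \<inter> P)" for c
    proof -
      let ?Q = "{r\<in>S. c \<le> \<kappa> r}"
      have finQ: "finite ?Q" using fin by simp
      have e1: "{r\<in>S'. c \<le> \<kappa> r} - P = (?Q - P) - {p}" using q by (auto simp: S'_def)
      have e2: "{r\<in>S'. c \<le> \<kappa> r} \<inter> P = (?Q \<inter> P) - {q}" using pP by (auto simp: S'_def)
      have c1: "card ({r\<in>S'. c \<le> \<kappa> r} - P) = card (?Q - P) - (if c \<le> \<kappa> p then 1 else 0)"
        unfolding e1 using finQ pS pP by (simp add: card_Diff_singleton_if)
      have c2: "card ({r\<in>S'. c \<le> \<kappa> r} \<inter> P) = card (?Q \<inter> P) - (if c \<le> \<kappa> q then 1 else 0)"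
        unfolding e2 using finQ q by (simp add: card_Diff_singleton_if)
      show ?thesis
      proof (cases "c \<le> \<kappa> p")
        case True
        then have "c \<le> \<kappa> q" using pq by simp
        then show ?thesis using True c1 c2 suf[of c] by simp
      next
        case False
        show ?thesis
        proof (cases "c \<le> \<kappa> q")
          case False
          then show ?thesis using \<open>\<not> c \<le> \<kappa> p\<close> c1 c2 suf[of c] by simp
        next
          case True
          have Qp: "{r\<in>S. \<kappa> p \<le> \<kappa> r} = insert p ?Q"
          proof
            show "{r\<in>S. \<kappa> p \<le> \<kappa> r} \<subseteq> insert p ?Q"
            proof
              fix r assume r: "r \<in> {r\<in>S. \<kappa> p \<le> \<kappa> r}"
              show "r \<in> insert p ?Q"
              proof (cases "\<kappa> r = \<kappa> p")
                case True
                then have "r = p" using inj r pS by (auto dest: inj_onD)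
                then show ?thesis by simp
              next
                case False
                then have "\<kappa> p < \<kappa> r" using r by simp
                then have "\<kappa> q \<le> \<kappa> r" using betw[of r] r by force
                then show ?thesis using r \<open>c \<le> \<kappa> q\<close> by simp
              qed
            qed
            show "insert p ?Q \<subseteq> {r\<in>S. \<kappa> p \<le> \<kappa> r}" using pS \<open>\<not> c \<le> \<kappa> p\<close> by auto
          qed
          have "p \<notin> ?Q" using \<open>\<not> c \<le> \<kappa> p\<close> by simp
          then have "insert p ?Q - P = insert p (?Q - P)" "p \<notin> ?Q - P" using pP by auto
          then have "card (insert p ?Q - P) = Suc (card (?Q - P))" using finQ by simp
          moreover have "insert p ?Q \<inter> P = ?Q \<inter> P" using pP by auto
          ultimately have "Suc (card (?Q - P)) \<le> card (?Q \<inter> P)" using suf[of "\<kappa> p"] Qp by simp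
          then show ?thesis using c1 c2 True \<open>\<not> c \<le> \<kappa> p\<close> by simp
        qed
      qed
    qed
    have totS': "card (S' - P) = card (S' \<inter> P)"
      unfolding S'P S'nP using tot fin pS pP q by (simp add: card_Diff_singleton_if)
    have pairS': "\<And>p q. p \<in> S' - P \<Longrightarrow> q \<in> S' \<inter> P \<Longrightarrow> \<kappa> p < \<kappa> q \<Longrightarrow> a p + b q \<le> a q + b p"
      using pair by (auto simp: S'_def)
    have ninfS': "\<And>p. p \<in> S' \<Longrightarrow> a p \<noteq> -\<infinity> \<and> b p \<noteq> -\<infinity>" using ninf by (auto simp: S'_def)
    have IH: "sum b (S'\<inter>P) + sum a (S'-P) \<le> sum a (S'\<inter>P) + sum b (S'-P) \<and>
     ((\<forall>p q. p \<in> S' - P \<longrightarrow> q \<in> S' \<inter> P \<longrightarrow> \<kappa> p < \<kappa> q \<longrightarrow> a p + b q = a q + b p \<longrightarrow> a q + b p \<noteq> \<infinity> \<longrightarrow> x p = x q) \<longrightarrow>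
      sum b (S'\<inter>P) + sum a (S'-P) = sum a (S'\<inter>P) + sum b (S'-P) \<longrightarrow> sum a (S'\<inter>P) + sum b (S'-P) \<noteq> \<infinity> \<longrightarrow>
      image_mset x (mset_set (S'\<inter>P)) = image_mset x (mset_set (S'-P)))"
      using less.hyps[OF cardS' finS' injS' sufS' totS' pairS' ninfS'] by blast
    have SP: "S \<inter> P = insert q (S' \<inter> P)" and qn: "q \<notin> S' \<inter> P" using q pP by (auto simp: S'_def)
    have SnP: "S - P = insert p (S' - P)" and pn: "p \<notin> S' - P" using pS pP q by (auto simp: S'_def)
    have finP: "finite (S' \<inter> P)" "finite (S' - P)" using finS' by auto
    have L: "sum b (S\<inter>P) + sum a (S-P) = (a p + b q) + (sum b (S'\<inter>P) + sum a (S'-P))"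
      unfolding SP SnP using finP qn pn by (simp add: ac_simps)
    have R: "sum a (S\<inter>P) + sum b (S-P) = (a q + b p) + (sum a (S'\<inter>P) + sum b (S'-P))"
      unfolding SP SnP using finP qn pn by (simp add: ac_simps)
    have pq_ineq: "a p + b q \<le> a q + b p" using pair[of p q] pS pP q pq by auto
    have ineq: "sum b (S\<inter>P) + sum a (S-P) \<le> sum a (S\<inter>P) + sum b (S-P)"
      unfolding L R by (rule add_mono[OF pq_ineq conjunct1[OF IH]])
    show ?thesis
    proof (intro conjI impI ineq)
      assume st: "\<forall>p q. p \<in> S - P \<longrightarrow> q \<in> S \<inter> P \<longrightarrow> \<kappa> p < \<kappa> q \<longrightarrow> a p + b q = a q + b p \<longrightarrow> a q + b p \<noteq> \<infinity> \<longrightarrow> x p = x q"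
        and eq: "sum b (S\<inter>P) + sum a (S-P) = sum a (S\<inter>P) + sum b (S-P)"
        and fi: "sum a (S\<inter>P) + sum b (S-P) \<noteq> \<infinity>"
      have n1: "a p + b q \<noteq> -\<infinity>" using ninf pS q(1) by simp
      have n2: "sum b (S'\<inter>P) + sum a (S'-P) \<noteq> -\<infinity>"
        using ninfS' sum_ninf[of "S'\<inter>P" b] sum_ninf[of "S'-P" a] by auto
      have both: "a p + b q = a q + b p \<and> sum b (S'\<inter>P) + sum a (S'-P) = sum a (S'\<inter>P) + sum b (S'-P)"
        using ereal_add_eq_cases[OF pq_ineq conjunct1[OF IH] _ _ n1 n2] eq fi unfolding L R by blast
      have n1': "a q + b p \<noteq> -\<infinity>" and n2': "sum a (S'\<inter>P) + sum b (S'-P) \<noteq> -\<infinity>"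
        using n1 n2 both by auto
      have fin1: "a q + b p \<noteq> \<infinity>" and fin2: "sum a (S'\<inter>P) + sum b (S'-P) \<noteq> \<infinity>"
        using fi n1' n2' unfolding R by auto
      have xpq: "x p = x q" using st pS pP q pq both fin1 by blast
      have st': "\<forall>p q. p \<in> S' - P \<longrightarrow> q \<in> S' \<inter> P \<longrightarrow> \<kappa> p < \<kappa> q \<longrightarrow> a p + b q = a q + b p \<longrightarrow> a q + b p \<noteq> \<infinity> \<longrightarrow> x p = x q"
        using st by (auto simp: S'_def)
      have ms: "image_mset x (mset_set (S'\<inter>P)) = image_mset x (mset_set (S'-P))"
        using IH st' both fin2 by blast
      show "image_mset x (mset_set (S\<inter>P)) = image_mset x (mset_set (S-P))"
        unfolding SP SnP using finP qn pn ms xpq by simp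
    qed
  qed
qed




definition sig4 :: "nat \<Rightarrow> nat" where "sig4 = Transposition.transpose 2 4 \<circ> Transposition.transpose 3 4"

lemma sig4_perm: "sig4 permutes {1..4}"
  unfolding sig4_def by (intro permutes_compose permutes_swap_id) auto

lemma sig4_vals: "sig4 1 = 1" "sig4 2 = 4" "sig4 3 = 2" "sig4 (4::nat) = 3"
  by (simp_all add: sig4_def Transposition.transpose_def)

definition Y4 :: "real \<Rightarrow> real \<Rightarrow> real \<Rightarrow> real \<Rightarrow> nat \<Rightarrow> real" where
  "Y4 y1 y2 y3 y4 = (\<lambda>i. if i = 1 then y1 else if i = 2 then y2 else if i = 3 then y3 else y4)"

lemma Y4_vals: "Y4 y1 y2 y3 y4 1 = y1" "Y4 y1 y2 y3 y4 2 = y2" "Y4 y1 y2 y3 y4 3 = y3" "Y4 y1 y2 y3 y4 4 = y4"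
  by (simp_all add: Y4_def)

lemma Y4_Suc0: "Y4 y1 y2 y3 y4 (Suc 0) = y1" by (simp add: Y4_def)
lemma sig4_Suc0: "sig4 (Suc 0) = Suc 0" using sig4_vals(1) by simp
lemmas Y4_vals' = Y4_vals Y4_Suc0 sig4_Suc0 sig4_vals

lemma Y4_in: "y1 \<in> I \<Longrightarrow> y2 \<in> I \<Longrightarrow> y3 \<in> I \<Longrightarrow> y4 \<in> I \<Longrightarrow> \<forall>i\<in>{1..4}. Y4 y1 y2 y3 y4 i \<in> I"
  by (auto simp: Y4_def)

lemma pair_mset_eq: "{#a, b#} = {#c, d#} \<longleftrightarrow> (a = c \<and> b = d) \<or> (a = d \<and> b = c)"
  by (auto simp: add_eq_conv_ex)

lemma wo_le:
  assumes wo: "well_ordering I w" and I: "y1 \<in> I" "y2 \<in> I" "y3 \<in> I" "y4 \<in> I"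
    and ord: "y1 \<le> y2" "y2 \<le> y3" "y3 \<le> y4"
  shows "w y1 y3 + w y2 y4 \<le> w y1 y4 + w y2 y3"
    and "w y1 y3 + w y2 y4 \<le> w y1 y2 + w y3 y4"
proof -
  let ?y = "Y4 y1 y2 y3 y4"
  let ?f = "\<lambda>\<sigma>. w (?y (\<sigma> 1)) (?y (\<sigma> 2)) + w (?y (\<sigma> 3)) (?y (\<sigma> 4))"
  have eq: "w (?y 1) (?y 3) + w (?y 2) (?y 4) = Min {?f \<sigma> | \<sigma>. \<sigma> permutes {1..4::nat}}"
  proof -
    have H: "\<forall>y::nat \<Rightarrow> real. (\<forall>i\<in>{1..4}. y i \<in> I) \<and> y 1 \<le> y 2 \<and> y 2 \<le> y 3 \<and> y 3 \<le> y 4 \<longrightarrow>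
        w (y 1) (y 3) + w (y 2) (y 4) =
        Min {w (y (\<sigma> 1)) (y (\<sigma> 2)) + w (y (\<sigma> 3)) (y (\<sigma> 4)) | \<sigma>. \<sigma> permutes {1..4::nat}}"
      using wo unfolding well_ordering_def by blast
    have pre: "(\<forall>i\<in>{1..4}. ?y i \<in> I) \<and> ?y 1 \<le> ?y 2 \<and> ?y 2 \<le> ?y 3 \<and> ?y 3 \<le> ?y 4"
      using Y4_in[OF I] ord by (simp only: Y4_vals)
    show ?thesis using H pre by blast
  qed
  have fin: "finite {?f \<sigma> | \<sigma>. \<sigma> permutes {1..4::nat}}"
  proof -
    have "{?f \<sigma> | \<sigma>. \<sigma> permutes {1..4::nat}} = ?f ` {\<sigma>. \<sigma> permutes {1..4::nat}}" by auto
    then show ?thesis using finite_permutations[of "{1..4::nat}"] by simp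
  qed
  have "w (?y 1) (?y 3) + w (?y 2) (?y 4) \<le> ?f sig4"
    unfolding eq by (rule Min_le[OF fin]) (use sig4_perm in blast)
  then show "w y1 y3 + w y2 y4 \<le> w y1 y4 + w y2 y3" by (simp only: Y4_vals sig4_vals)
  have "w (?y 1) (?y 3) + w (?y 2) (?y 4) \<le> ?f id"
    unfolding eq by (rule Min_le[OF fin]) (use permutes_id in blast)
  then show "w y1 y3 + w y2 y4 \<le> w y1 y2 + w y3 y4" by (simp only: Y4_vals id_apply)
qed

lemma swo_eq:
  assumes wo: "strictly_well_ordering I w" and I: "y1 \<in> I" "y2 \<in> I" "y3 \<in> I" "y4 \<in> I"
    and ord: "y1 \<le> y2" "y2 \<le> y3" "y3 \<le> y4"
  shows "w y1 y3 + w y2 y4 = w y1 y4 + w y2 y3 \<Longrightarrow> w y1 y3 + w y2 y4 \<noteq> \<infinity> \<Longrightarrow> y3 = y4 \<or> y1 = y2"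
    and "w y1 y3 + w y2 y4 = w y1 y2 + w y3 y4 \<Longrightarrow> w y1 y3 + w y2 y4 \<noteq> \<infinity> \<Longrightarrow> y2 = y3 \<or> y1 = y4"
proof -
  let ?y = "Y4 y1 y2 y3 y4"
  have st: "\<And>\<sigma>. \<sigma> permutes {1..4::nat} \<Longrightarrow>
        w (?y 1) (?y 3) + w (?y 2) (?y 4) = w (?y (\<sigma> 1)) (?y (\<sigma> 2)) + w (?y (\<sigma> 3)) (?y (\<sigma> 4))
        \<Longrightarrow> w (?y 1) (?y 3) + w (?y 2) (?y 4) = \<infinity> \<or>
            {#?y 1, ?y 3#} \<in> {{#?y (\<sigma> 1), ?y (\<sigma> 2)#}, {#?y (\<sigma> 3), ?y (\<sigma> 4)#}}"
  proof -
    have H: "\<forall>y::nat \<Rightarrow> real. \<forall>\<sigma>. (\<forall>i\<in>{1..4}. y i \<in> I) \<and> y 1 \<le> y 2 \<and> y 2 \<le> y 3 \<and> y 3 \<le> y 4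
        \<and> \<sigma> permutes {1..4::nat} \<and>
        w (y 1) (y 3) + w (y 2) (y 4) = w (y (\<sigma> 1)) (y (\<sigma> 2)) + w (y (\<sigma> 3)) (y (\<sigma> 4))
        \<longrightarrow> w (y 1) (y 3) + w (y 2) (y 4) = \<infinity> \<or>
            {#y 1, y 3#} \<in> {{#y (\<sigma> 1), y (\<sigma> 2)#}, {#y (\<sigma> 3), y (\<sigma> 4)#}}"
      using wo unfolding strictly_well_ordering_def by blast
    have pre: "(\<forall>i\<in>{1..4}. ?y i \<in> I) \<and> ?y 1 \<le> ?y 2 \<and> ?y 2 \<le> ?y 3 \<and> ?y 3 \<le> ?y 4"
      using Y4_in[OF I] ord by (simp only: Y4_vals)
    fix \<sigma> assume "\<sigma> permutes {1..4::nat}" "w (?y 1) (?y 3) + w (?y 2) (?y 4) = w (?y (\<sigma> 1)) (?y (\<sigma> 2)) + w (?y (\<sigma> 3)) (?y (\<sigma> 4))"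
    then show "w (?y 1) (?y 3) + w (?y 2) (?y 4) = \<infinity> \<or>
            {#?y 1, ?y 3#} \<in> {{#?y (\<sigma> 1), ?y (\<sigma> 2)#}, {#?y (\<sigma> 3), ?y (\<sigma> 4)#}}"
      using H pre by blast
  qed
  show "w y1 y3 + w y2 y4 = w y1 y4 + w y2 y3 \<Longrightarrow> w y1 y3 + w y2 y4 \<noteq> \<infinity> \<Longrightarrow> y3 = y4 \<or> y1 = y2"
  proof -
    assume a: "w y1 y3 + w y2 y4 = w y1 y4 + w y2 y3" "w y1 y3 + w y2 y4 \<noteq> \<infinity>"
    have "{#y1, y3#} \<in> {{#y1, y4#}, {#y2, y3#}}"
      using st[OF sig4_perm] a unfolding Y4_vals sig4_vals by simp
    then show "y3 = y4 \<or> y1 = y2" by (auto simp: pair_mset_eq)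
  qed
  show "w y1 y3 + w y2 y4 = w y1 y2 + w y3 y4 \<Longrightarrow> w y1 y3 + w y2 y4 \<noteq> \<infinity> \<Longrightarrow> y2 = y3 \<or> y1 = y4"
  proof -
    assume a: "w y1 y3 + w y2 y4 = w y1 y2 + w y3 y4" "w y1 y3 + w y2 y4 \<noteq> \<infinity>"
    have "{#y1, y3#} \<in> {{#y1, y2#}, {#y3, y4#}}"
      using st[OF permutes_id] a unfolding Y4_vals id_apply by simp
    then show "y2 = y3 \<or> y1 = y4" by (auto simp: pair_mset_eq)
  qed
qed




definition walk :: "nat set \<Rightarrow> nat set \<Rightarrow> nat \<Rightarrow> int" where
  "walk X P k = int (card {j\<in>X\<inter>P. j \<le> k}) - int (card {j\<in>X-P. j \<le> k})"

definition gs :: "nat set \<Rightarrow> nat set \<Rightarrow> int" where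
  "gs X P = int (card (X\<inter>P)) - int (card (X-P))"

lemma walk_0: "0 \<notin> X \<Longrightarrow> walk X P 0 = 0"
proof -
  assume "0 \<notin> X"
  then have e: "{j\<in>X\<inter>P. j \<le> 0} = {}" "{j\<in>X-P. j \<le> 0} = {}" by (auto intro: gr0I)
  show ?thesis unfolding walk_def e by simp
qed

lemma walk_Suc:
  assumes "finite X"
  shows "walk X P (Suc k) = walk X P k + (if Suc k \<in> X then (if Suc k \<in> P then 1 else -1) else 0)"
proof -
  have e1: "{j\<in>X\<inter>P. j \<le> Suc k} = (if Suc k \<in> X \<inter> P then insert (Suc k) {j\<in>X\<inter>P. j \<le> k} else {j\<in>X\<inter>P. j \<le> k})"
    by (auto simp: le_Suc_eq)
  have e2: "{j\<in>X-P. j \<le> Suc k} = (if Suc k \<in> X - P then insert (Suc k) {j\<in>X-P. j \<le> k} else {j\<in>X-P. j \<le> k})"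
    by (auto simp: le_Suc_eq)
  have f1: "finite {j\<in>X\<inter>P. j \<le> k}" "finite {j\<in>X-P. j \<le> k}" using assms by auto
  show ?thesis unfolding walk_def e1 e2 using f1 by auto
qed

lemma walk_total:
  assumes "finite X" "X \<subseteq> {..N}" "N \<le> k"
  shows "walk X P k = gs X P"
proof -
  have "{j\<in>X\<inter>P. j \<le> k} = X \<inter> P" "{j\<in>X-P. j \<le> k} = X - P" using assms by auto
  then show ?thesis by (simp add: walk_def gs_def)
qed

lemma gs_gt:
  assumes "finite X"
  shows "gs {j\<in>X. a < j} P = gs X P - walk X P a"
proof -
  have u1: "X \<inter> P = {j\<in>X\<inter>P. j \<le> a} \<union> ({j\<in>X. a < j} \<inter> P)" by auto
  have u2: "X - P = {j\<in>X-P. j \<le> a} \<union> ({j\<in>X. a < j} - P)" by auto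
  have c1: "card (X \<inter> P) = card {j\<in>X\<inter>P. j \<le> a} + card ({j\<in>X. a < j} \<inter> P)"
    by (subst u1, rule card_Un_disjoint) (use assms in auto)
  have c2: "card (X - P) = card {j\<in>X-P. j \<le> a} + card ({j\<in>X. a < j} - P)"
    by (subst u2, rule card_Un_disjoint) (use assms in auto)
  show ?thesis unfolding gs_def walk_def using c1 c2 by simp
qed

lemma gs_between:
  assumes "finite X" "a \<le> b"
  shows "gs {j\<in>X. a < j \<and> j \<le> b} P = walk X P b - walk X P a"
proof -
  have "gs {j\<in>{j\<in>X. j \<le> b}. a < j} P = gs {j\<in>X. j \<le> b} P - walk {j\<in>X. j \<le> b} P a"
    using assms by (intro gs_gt) auto
  moreover have "{j\<in>{j\<in>X. j \<le> b}. a < j} = {j\<in>X. a < j \<and> j \<le> b}" by auto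
  moreover have "gs {j\<in>X. j \<le> b} P = walk X P b"
    unfolding gs_def walk_def by (rule arg_cong2[where f="\<lambda>u v. int (card u) - int (card v)"]) auto
  moreover have "walk {j\<in>X. j \<le> b} P a = walk X P a"
  proof -
    have "{j \<in> {j \<in> X. j \<le> b} \<inter> P. j \<le> a} = {j \<in> X \<inter> P. j \<le> a}"
         "{j \<in> {j \<in> X. j \<le> b} - P. j \<le> a} = {j \<in> X - P. j \<le> a}" using assms(2) by auto
    then show ?thesis unfolding walk_def by simp
  qed
  ultimately show ?thesis by simp
qed

lemma gs_le:
  shows "gs {j\<in>X. j \<le> b} P = walk X P b"
  unfolding gs_def walk_def by (rule arg_cong2[where f="\<lambda>u v. int (card u) - int (card v)"]) auto

lemma gs_Un:
  assumes "finite X" "finite Y" "X \<inter> Y = {}"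
  shows "gs (X \<union> Y) P = gs X P + gs Y P"
proof -
  have "card ((X \<union> Y) \<inter> P) = card (X \<inter> P) + card (Y \<inter> P)"
    by (subst card_Un_disjoint[symmetric]) (use assms in \<open>auto intro: arg_cong[where f=card]\<close>)
  moreover have "card ((X \<union> Y) - P) = card (X - P) + card (Y - P)"
    by (subst card_Un_disjoint[symmetric]) (use assms in \<open>auto intro: arg_cong[where f=card]\<close>)
  ultimately show ?thesis by (simp add: gs_def)
qed

lemma fcum_walk:
  assumes "A \<subseteq> {1..2*n}"
  shows "fcum n A (real k) = walk {1..2*n} A k"
proof -
  have "{j\<in>A. real j \<le> real k} = {j\<in>{1..2*n}\<inter>A. j \<le> k}" using assms by auto
  moreover have "{j\<in>{1..2*n} - A. real j \<le> real k} = {j\<in>{1..2*n}-A. j \<le> k}" by auto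
  ultimately show ?thesis by (simp add: fcum_def walk_def)
qed

lemma fcum_floor:
  assumes "A \<subseteq> {1..2*n}"
  shows "fcum n A t = fcum n A (real (min (nat \<lfloor>t\<rfloor>) (2*n)))"
proof -
  have key: "\<And>j. j \<ge> 1 \<Longrightarrow> j \<le> 2*n \<Longrightarrow> (real j \<le> t \<longleftrightarrow> j \<le> min (nat \<lfloor>t\<rfloor>) (2*n))"
  proof -
    fix j :: nat assume j: "j \<ge> 1" "j \<le> 2*n"
    have "real j \<le> t \<longleftrightarrow> int j \<le> \<lfloor>t\<rfloor>" by (metis le_floor_iff of_int_of_nat_eq)
    also have "\<dots> \<longleftrightarrow> j \<le> nat \<lfloor>t\<rfloor>" using j by linarith
    finally show "(real j \<le> t \<longleftrightarrow> j \<le> min (nat \<lfloor>t\<rfloor>) (2*n))" using j by simp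
  qed
  have "{j\<in>A. real j \<le> t} = {j\<in>A. real j \<le> real (min (nat \<lfloor>t\<rfloor>) (2*n))}"
  proof -
    have "\<And>j. j \<in> A \<Longrightarrow> (real j \<le> t \<longleftrightarrow> real j \<le> real (min (nat \<lfloor>t\<rfloor>) (2*n)))"
      using key assms by (subst of_nat_le_iff) force
    then show ?thesis by blast
  qed
  moreover have "{j\<in>{1..2*n} - A. real j \<le> t} = {j\<in>{1..2*n} - A. real j \<le> real (min (nat \<lfloor>t\<rfloor>) (2*n))}"
  proof -
    have "\<And>j. j \<in> {1..2*n} \<Longrightarrow> (real j \<le> t \<longleftrightarrow> real j \<le> real (min (nat \<lfloor>t\<rfloor>) (2*n)))"
      using key by (subst of_nat_le_iff) force
    then show ?thesis by blast
  qed
  ultimately show ?thesis by (simp add: fcum_def)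
qed

lemma range_fcum:
  assumes "A \<subseteq> {1..2*n}"
  shows "range (fcum n A) = (\<lambda>k. walk {1..2*n} A k) ` {0..2*n}"
proof
  show "range (fcum n A) \<subseteq> (\<lambda>k. walk {1..2*n} A k) ` {0..2*n}"
  proof
    fix v assume "v \<in> range (fcum n A)"
    then obtain t where "v = fcum n A t" by auto
    then have "v = walk {1..2*n} A (min (nat \<lfloor>t\<rfloor>) (2*n))"
      using fcum_floor[OF assms] fcum_walk[OF assms] by simp
    then show "v \<in> (\<lambda>k. walk {1..2*n} A k) ` {0..2*n}" by force
  qed
  show "(\<lambda>k. walk {1..2*n} A k) ` {0..2*n} \<subseteq> range (fcum n A)"
  proof
    fix v assume "v \<in> (\<lambda>k. walk {1..2*n} A k) ` {0..2*n}"
    then obtain k where "v = walk {1..2*n} A k" by auto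
    then have "v = fcum n A (real k)" using fcum_walk[OF assms] by simp
    then show "v \<in> range (fcum n A)" by simp
  qed
qed

lemma maxf_walk: "A \<subseteq> {1..2*n} \<Longrightarrow> maxf n A = Max ((\<lambda>k. walk {1..2*n} A k) ` {0..2*n})"
  by (simp add: maxf_def range_fcum)

lemma minf_walk: "A \<subseteq> {1..2*n} \<Longrightarrow> minf n A = Min ((\<lambda>k. walk {1..2*n} A k) ` {0..2*n})"
  by (simp add: minf_def range_fcum)




locale lev =
  fixes n :: nat and A :: "nat set"
  assumes AU: "A \<subseteq> {1..2*n}" and cardA: "card A = n" and M1: "maxf n A \<ge> 1"
begin

abbreviation "UU \<equiv> {1..2*n}"
abbreviation "FF k \<equiv> walk UU A k"
abbreviation "MM \<equiv> maxf n A"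
abbreviation "LL \<equiv> levels n A"

lemma F0: "FF 0 = 0" by (rule walk_0) auto

lemma F2n: "FF (2*n) = 0"
proof -
  have "FF (2*n) = gs UU A" by (rule walk_total[of _ "2*n"]) auto
  moreover have "card (UU \<inter> A) = n" using AU cardA by (simp add: Int_absorb1)
  moreover have "card (UU - A) = n" using AU cardA by (simp add: card_Diff_subset finite_subset)
  ultimately show ?thesis by (simp add: gs_def)
qed

lemma Fstep: "FF (Suc k) = FF k + (if Suc k \<in> UU then (if Suc k \<in> A then 1 else -1) else 0)"
  by (rule walk_Suc) simp

lemma MM_eq: "MM = Max (FF ` {0..2*n})" by (rule maxf_walk[OF AU])

lemma F_le_M: "k \<le> 2*n \<Longrightarrow> FF k \<le> MM"
  unfolding MM_eq by (rule Max_ge) auto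

lemma M_attained: "\<exists>k\<le>2*n. FF k = MM"
proof -
  have "MM \<in> FF ` {0..2*n}" unfolding MM_eq by (rule Max_in) auto
  then show ?thesis by auto
qed

lemma levels_eq: "LL = {k\<in>UU. FF k = MM}"
  unfolding levels_def using fcum_walk[OF AU] by simp

lemma L_props:
  assumes "l \<in> LL"
  shows "l \<in> A" "1 \<le> l" "l < 2*n" "Suc l \<notin> A" "Suc l \<in> UU" "FF (l - 1) = MM - 1" "FF l = MM"
    "FF (Suc l) = MM - 1"
proof -
  have l: "l \<in> UU" "FF l = MM" using assms levels_eq by auto
  then show "1 \<le> l" "FF l = MM" by auto
  obtain l0 where l0: "l = Suc l0" using l by (cases l) auto
  have "FF l0 \<le> MM" using F_le_M l l0 by simp
  moreover have "FF l = FF l0 + (if l \<in> A then 1 else -1)" using Fstep[of l0] l l0 by simp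
  ultimately show lA: "l \<in> A" and "FF (l - 1) = MM - 1" using l l0 by (auto split: if_splits)
  show "l < 2*n"
  proof (rule ccontr)
    assume "\<not> l < 2*n"
    then have "l = 2*n" using l by simp
    then show False using F2n M1 l by simp
  qed
  then show su: "Suc l \<in> UU" by simp
  have "FF (Suc l) \<le> MM" using F_le_M su by simp
  moreover have "FF (Suc l) = MM + (if Suc l \<in> A then 1 else -1)" using Fstep[of l] l su by simp
  ultimately show "Suc l \<notin> A" "FF (Suc l) = MM - 1" by (auto split: if_splits)
qed

lemma L_sub: "LL \<subseteq> A" using L_props by blast
lemma L'_sub: "Suc ` LL \<subseteq> UU - A" using L_props by blast
lemma L_Suc_notin: "l \<in> LL \<Longrightarrow> Suc l \<notin> LL" using L_props(4) L_props(1) by blast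
lemma finL: "finite LL" using levels_eq by simp

lemma L_ne: "LL \<noteq> {}"
proof -
  obtain k where k: "k \<le> 2*n" "FF k = MM" using M_attained by blast
  have "k \<noteq> 0"
  proof
    assume "k = 0" then show False using k F0 M1 by simp
  qed
  then have "k \<in> LL" using k levels_eq by auto
  then show ?thesis by auto
qed

lemma BA_eq: "BA n A = (A - LL) \<union> Suc ` LL"
  unfolding BA_def using L_Suc_notin by auto

lemma BA_sub: "BA n A \<subseteq> UU" unfolding BA_eq using AU L'_sub by auto

lemma FB: "walk UU (BA n A) k = FF k - (if k \<in> LL then 2 else 0)"
proof (induction k)
  case 0
  then show ?case using F0 walk_0[of UU "BA n A"] levels_eq by simp
next
  case (Suc k)
  have s1: "walk UU (BA n A) (Suc k) = walk UU (BA n A) k + (if Suc k \<in> UU then (if Suc k \<in> BA n A then 1 else -1) else 0)"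
    by (rule walk_Suc) simp
  show ?case
  proof (cases "Suc k \<in> LL")
    case True
    then have "k \<notin> LL" using L_Suc_notin by (metis L_props(1) L_props(4))
    moreover have "Suc k \<notin> BA n A" using True unfolding BA_def by auto
    moreover have "Suc k \<in> A" "Suc k \<in> UU" using True L_props(1) levels_eq by auto
    ultimately show ?thesis using s1 Suc.IH Fstep[of k] True by simp
  next
    case False
    show ?thesis
    proof (cases "k \<in> LL")
      case True
      then have "Suc k \<in> BA n A" "Suc k \<notin> A" "Suc k \<in> UU" using L_props[OF True] unfolding BA_eq by auto
      then show ?thesis using s1 Suc.IH Fstep[of k] True False by simp
    next
      case False2: False
      have "Suc k \<in> BA n A \<longleftrightarrow> Suc k \<in> A" unfolding BA_eq using False False2 by auto
      then show ?thesis using s1 Suc.IH Fstep[of k] False False2 by simp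
    qed
  qed
qed

lemma notL_lt: "k \<le> 2*n \<Longrightarrow> k \<notin> LL \<Longrightarrow> FF k \<le> MM - 1"
proof -
  assume k: "k \<le> 2*n" "k \<notin> LL"
  have "FF k \<noteq> MM"
  proof
    assume e: "FF k = MM"
    show False
    proof (cases "k = 0")
      case True then show False using e F0 M1 by simp
    next
      case False then have "k \<in> LL" using k e levels_eq by auto
      then show False using k by simp
    qed
  qed
  then show ?thesis using F_le_M[OF k(1)] by simp
qed

lemma maxf_B: "maxf n (BA n A) = MM - 1"
proof -
  have "maxf n (BA n A) = Max ((\<lambda>k. walk UU (BA n A) k) ` {0..2*n})" by (rule maxf_walk[OF BA_sub])
  also have "\<dots> = MM - 1"
  proof (rule Max_eqI)
    show "finite ((\<lambda>k. walk UU (BA n A) k) ` {0..2*n})" by simp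
    fix y assume "y \<in> (\<lambda>k. walk UU (BA n A) k) ` {0..2*n}"
    then obtain k where k: "k \<le> 2*n" "y = walk UU (BA n A) k" by auto
    show "y \<le> MM - 1"
    proof (cases "k \<in> LL")
      case True then show ?thesis using k FB L_props(7)[OF True] by simp
    next
      case False then show ?thesis using k FB notL_lt by simp
    qed
  next
    obtain l where l: "l \<in> LL" using L_ne by auto
    have "l - 1 \<notin> LL" using L_props[OF l] levels_eq by auto
    then have "walk UU (BA n A) (l - 1) = MM - 1" using FB L_props[OF l] by simp
    moreover have "l - 1 \<in> {0..2*n}" using L_props[OF l] by simp
    ultimately show "MM - 1 \<in> (\<lambda>k. walk UU (BA n A) k) ` {0..2*n}" by (metis image_eqI)
  qed
  finally show ?thesis .
qed

lemma minf_B: "minf n A \<le> MM - 2 \<Longrightarrow> minf n (BA n A) = minf n A"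
proof -
  assume mm: "minf n A \<le> MM - 2"
  have mA: "minf n A = Min (FF ` {0..2*n})" by (rule minf_walk[OF AU])
  have "minf n (BA n A) = Min ((\<lambda>k. walk UU (BA n A) k) ` {0..2*n})" by (rule minf_walk[OF BA_sub])
  also have "\<dots> = minf n A"
  proof (rule Min_eqI)
    show "finite ((\<lambda>k. walk UU (BA n A) k) ` {0..2*n})" by simp
    fix y assume "y \<in> (\<lambda>k. walk UU (BA n A) k) ` {0..2*n}"
    then obtain k where k: "k \<le> 2*n" "y = walk UU (BA n A) k" by auto
    have "minf n A \<le> FF k" unfolding mA using k by (intro Min_le) auto
    then show "minf n A \<le> y"
    proof (cases "k \<in> LL")
      case True then show ?thesis using k FB mm L_props(7)[OF True] by simp
    next
      case False then show ?thesis using k FB \<open>minf n A \<le> FF k\<close> by simp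
    qed
  next
    have "minf n A \<in> FF ` {0..2*n}" unfolding mA by (rule Min_in) auto
    then obtain k where k: "k \<le> 2*n" "FF k = minf n A" by auto
    have "k \<notin> LL" using k mm levels_eq M1 by auto
    then have "walk UU (BA n A) k = minf n A" using FB k by simp
    then show "minf n A \<in> (\<lambda>k. walk UU (BA n A) k) ` {0..2*n}" using k(1) by (metis atLeastAtMost_iff image_eqI zero_le)
  qed
  finally show ?thesis .
qed

lemma osc_part: "osc n A \<ge> 2 \<longrightarrow> osc n (BA n A) < osc n A"
  using maxf_B minf_B unfolding osc_def by auto

abbreviation "RR \<equiv> UU - LL - Suc ` LL"
abbreviation "HH k \<equiv> walk RR A k"

lemma finRR: "finite RR" by simp

lemma F_big: "2*n \<le> k \<Longrightarrow> FF k = 0"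
  using walk_total[of UU "2*n" k A] walk_total[of UU "2*n" "2*n" A] F2n by simp

lemma H_eq: "HH k = FF k - (if k \<in> LL then 1 else 0)"
proof (induction k)
  case 0
  then show ?case using F0 walk_0[of RR A] levels_eq by simp
next
  case (Suc k)
  have s1: "HH (Suc k) = HH k + (if Suc k \<in> RR then (if Suc k \<in> A then 1 else -1) else 0)"
    by (rule walk_Suc) simp
  show ?case
  proof (cases "Suc k \<in> LL")
    case True
    then have "k \<notin> LL" by (metis L_props(1) L_props(4))
    moreover have "Suc k \<notin> RR" using True by auto
    moreover have "Suc k \<in> A" "Suc k \<in> UU" using True L_props(1) levels_eq by auto
    ultimately show ?thesis using s1 Suc.IH Fstep[of k] True by simp
  next
    case False
    show ?thesis
    proof (cases "k \<in> LL")
      case True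
      then have "Suc k \<notin> RR" "Suc k \<notin> A" "Suc k \<in> UU" using L_props[OF True] by auto
      then show ?thesis using s1 Suc.IH Fstep[of k] True False by simp
    next
      case False2: False
      have "Suc k \<in> RR \<longleftrightarrow> Suc k \<in> UU" using False False2 by auto
      then show ?thesis using s1 Suc.IH Fstep[of k] False False2 by simp
    qed
  qed
qed

lemma H_le: "HH k \<le> MM - 1"
proof (cases "k \<le> 2*n")
  case True
  then show ?thesis
  proof (cases "k \<in> LL")
    case True
    then show ?thesis using H_eq L_props(7)[OF True] by simp
  next
    case False
    then show ?thesis using H_eq notL_lt \<open>k \<le> 2*n\<close> by simp
  qed
next
  case False
  then have "k \<notin> LL" using levels_eq by auto
  then show ?thesis using H_eq F_big False M1 by simp
qed

lemma H_lm1: "l \<in> LL \<Longrightarrow> HH (l - 1) = MM - 1"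
proof -
  assume l: "l \<in> LL"
  have "l - 1 \<notin> LL" using L_props[OF l] levels_eq by auto
  then show ?thesis using H_eq L_props[OF l] by simp
qed

lemma gs_RR: "gs RR A = 0"
proof -
  have "HH (2*n) = gs RR A" by (rule walk_total[of _ "2*n"]) auto
  moreover have "2*n \<notin> LL" using L_props(3) by blast
  ultimately show ?thesis using H_eq F2n by simp
qed

definition kap :: "nat \<Rightarrow> nat \<Rightarrow> nat" where
  "kap l r = (if l < r then r - l else r + 2*n)"

lemma kap_inj: "inj_on (kap l) RR"
proof (rule inj_onI)
  fix r1 r2 assume r: "r1 \<in> RR" "r2 \<in> RR" "kap l r1 = kap l r2"
  then have "r1 \<le> 2*n" "r2 \<le> 2*n" by auto
  with r show "r1 = r2" unfolding kap_def by (auto split: if_splits)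
qed

lemma gs_nonneg_card: "0 \<le> gs X P \<Longrightarrow> card (X - P) \<le> card (X \<inter> P)"
  unfolding gs_def by simp

lemma suffix:
  assumes l: "l \<in> LL"
  shows "card ({r\<in>RR. c \<le> kap l r} - A) \<le> card ({r\<in>RR. c \<le> kap l r} \<inter> A)"
proof (rule gs_nonneg_card)
  have l1: "1 \<le> l" "l < 2*n" using L_props[OF l] by auto
  show "0 \<le> gs {r\<in>RR. c \<le> kap l r} A"
  proof (cases "c \<le> 2*n")
    case True
    have e: "{r\<in>RR. c \<le> kap l r} = {r\<in>RR. l + (c - 1) < r} \<union> {r\<in>RR. r \<le> l - 1}"
    proof (intro set_eqI iffI)
      fix r assume r: "r \<in> {r\<in>RR. c \<le> kap l r}"
      then have "r \<noteq> l" "r \<le> 2*n" using l by auto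
      then show "r \<in> {r\<in>RR. l + (c - 1) < r} \<union> {r\<in>RR. r \<le> l - 1}"
        using r l1 unfolding kap_def by (auto split: if_splits)
    next
      fix r assume r: "r \<in> {r\<in>RR. l + (c - 1) < r} \<union> {r\<in>RR. r \<le> l - 1}"
      then show "r \<in> {r\<in>RR. c \<le> kap l r}"
        using True l1 unfolding kap_def by (auto split: if_splits)
    qed
    have "gs {r\<in>RR. c \<le> kap l r} A = gs {r\<in>RR. l + (c - 1) < r} A + gs {r\<in>RR. r \<le> l - 1} A"
      unfolding e using l1 by (intro gs_Un) auto
    also have "\<dots> = (gs RR A - HH (l + (c - 1))) + HH (l - 1)"
      using gs_gt[OF finRR, of "l + (c - 1)" A] gs_le[of RR "l - 1" A] by (simp only:)
    also have "\<dots> = MM - 1 - HH (l + (c - 1))" using gs_RR H_lm1[OF l] by simp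
    finally show ?thesis using H_le[of "l + (c - 1)"] by simp
  next
    case False
    have e: "{r\<in>RR. c \<le> kap l r} = {r\<in>RR. c - 2*n - 1 < r \<and> r \<le> l - 1}"
    proof (intro set_eqI iffI)
      fix r assume r: "r \<in> {r\<in>RR. c \<le> kap l r}"
      then have "r \<noteq> l" "r \<le> 2*n" using l by auto
      then show "r \<in> {r\<in>RR. c - 2*n - 1 < r \<and> r \<le> l - 1}"
        using r l1 False unfolding kap_def by (auto split: if_splits)
    next
      fix r assume r: "r \<in> {r\<in>RR. c - 2*n - 1 < r \<and> r \<le> l - 1}"
      then show "r \<in> {r\<in>RR. c \<le> kap l r}"
        using False l1 unfolding kap_def by (auto split: if_splits)
    qed
    show ?thesis
    proof (cases "c - 2*n - 1 \<le> l - 1")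
      case True
      have "gs {r\<in>RR. c \<le> kap l r} A = HH (l - 1) - HH (c - 2*n - 1)"
        unfolding e by (rule gs_between[OF finRR True])
      then show ?thesis using H_lm1[OF l] H_le[of "c - 2*n - 1"] by simp
    next
      case False
      then have em: "{r\<in>RR. c \<le> kap l r} = {}" unfolding e by auto
      show ?thesis unfolding em by (simp add: gs_def)
    qed
  qed
qed

lemma tot_RR: "card (RR - A) = card (RR \<inter> A)"
  using gs_RR unfolding gs_def by simp

end




lemma sum_eq_each:
  fixes f g :: "'a \<Rightarrow> ereal"
  assumes "finite L" "\<forall>l\<in>L. f l \<le> g l" "\<forall>l\<in>L. f l \<noteq> -\<infinity>" "sum f L = sum g L" "sum g L \<noteq> \<infinity>"
  shows "\<forall>l\<in>L. f l = g l \<and> g l \<noteq> \<infinity>"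
  using assms
proof (induction L rule: finite_induct)
  case empty then show ?case by simp
next
  case (insert a F)
  note P = insert.prems
  have le1: "f a \<le> g a" using P(1) by simp
  have le2: "sum f F \<le> sum g F" by (rule sum_mono) (use P(1) in simp)
  have n1: "f a \<noteq> -\<infinity>" using P(2) by simp
  have n2: "sum f F \<noteq> -\<infinity>" by (rule sum_ninf) (use P(2) in simp)
  have eq: "f a + sum f F = g a + sum g F" using P(3) unfolding sum.insert[OF insert.hyps] .
  have fin: "g a + sum g F \<noteq> \<infinity>" using P(4) unfolding sum.insert[OF insert.hyps] .
  have both: "f a = g a \<and> sum f F = sum g F"
    by (rule ereal_add_eq_cases[OF le1 le2 eq fin n1 n2])
  have n1': "g a \<noteq> -\<infinity>" and n2': "sum g F \<noteq> -\<infinity>" using both n1 n2 by auto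
  have ga: "g a \<noteq> \<infinity>" and gF: "sum g F \<noteq> \<infinity>" using fin n1' n2' by auto
  have P1: "\<forall>l\<in>F. f l \<le> g l" "\<forall>l\<in>F. f l \<noteq> -\<infinity>" using P(1,2) by simp_all
  have "\<forall>l\<in>F. f l = g l \<and> g l \<noteq> \<infinity>" using insert.IH[OF P1 conjunct2[OF both] gF] .
  then show ?case using both ga by simp
qed

locale cst = lev +
  fixes I :: "real set" and w :: "real \<Rightarrow> real \<Rightarrow> ereal" and x :: "nat \<Rightarrow> real"
  assumes wsym: "\<forall>a\<in>I. \<forall>b\<in>I. w a b = w b a" and wninf: "\<forall>a\<in>I. \<forall>b\<in>I. w a b \<noteq> -\<infinity>"
    and xI: "\<forall>i\<in>{1..2*n}. x i \<in> I" and xmono: "\<forall>i j. 1 \<le> i \<and> i \<le> j \<and> j \<le> 2*n \<longrightarrow> x i \<le> x j"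
begin

lemma wS: "i \<in> UU \<Longrightarrow> j \<in> UU \<Longrightarrow> w (x i) (x j) = w (x j) (x i)"
  using wsym xI by blast

lemma wN: "i \<in> UU \<Longrightarrow> j \<in> UU \<Longrightarrow> w (x i) (x j) \<noteq> -\<infinity>"
  using wninf xI by blast

lemma xI': "i \<in> UU \<Longrightarrow> x i \<in> I" using xI by blast

lemma xM: "i \<in> UU \<Longrightarrow> j \<in> UU \<Longrightarrow> i \<le> j \<Longrightarrow> x i \<le> x j" using xmono by auto

lemma RR_props: "r \<in> RR \<Longrightarrow> l \<in> LL \<Longrightarrow> r \<noteq> l \<and> r \<noteq> Suc l \<and> r \<in> UU"
  by auto

lemma pair_cases:
  assumes l: "l \<in> LL" and p: "p \<in> RR - A" and q: "q \<in> RR \<inter> A" and k: "kap l p < kap l q"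
  obtains (c1) "Suc l < p" "p < q" | (c2) "q < l" "Suc l < p" | (c3) "p < q" "q < l"
proof -
  have pp: "p \<noteq> l" "p \<noteq> Suc l" "p \<in> UU" and qq: "q \<noteq> l" "q \<noteq> Suc l" "q \<in> UU"
    using RR_props[OF _ l] p q by auto
  consider "l < p" "l < q" | "l < p" "q < l" | "p < l" "l < q" | "p < l" "q < l"
    using pp qq by linarith
  then show ?thesis
  proof cases
    case 1 then show ?thesis using k pp that unfolding kap_def by auto
  next
    case 2 then show ?thesis using k pp that unfolding kap_def by auto
  next
    case 3 then have False using k qq unfolding kap_def by auto
    then show ?thesis ..
  next
    case 4 then show ?thesis using k that unfolding kap_def by auto
  qed
qed

lemma pair_ineq:
  assumes wo: "well_ordering I w" and l: "l \<in> LL" and p: "p \<in> RR - A" and q: "q \<in> RR \<inter> A"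
    and k: "kap l p < kap l q"
  shows "w (x p) (x l) + w (x q) (x (Suc l)) \<le> w (x q) (x l) + w (x p) (x (Suc l))"
proof -
  have lU: "l \<in> UU" "Suc l \<in> UU" using L_props[OF l] by auto
  have pU: "p \<in> UU" and qU: "q \<in> UU" using p q by auto
  note s = wS[OF lU(1) pU] wS[OF lU(2) qU] wS[OF lU(1) qU] wS[OF lU(2) pU]
  show ?thesis
  proof (rule pair_cases[OF l p q k])
    assume c1: "Suc l < p" "p < q"
    have "w (x l) (x p) + w (x (Suc l)) (x q) \<le> w (x l) (x q) + w (x (Suc l)) (x p)"
      by (rule wo_le(1)[OF wo xI'[OF lU(1)] xI'[OF lU(2)] xI'[OF pU] xI'[OF qU]])
        (use xM lU pU qU c1 in auto)
    then show ?thesis using s by simp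
  next
    assume c2: "q < l" "Suc l < p"
    have "w (x q) (x (Suc l)) + w (x l) (x p) \<le> w (x q) (x l) + w (x (Suc l)) (x p)"
      by (rule wo_le(2)[OF wo xI'[OF qU] xI'[OF lU(1)] xI'[OF lU(2)] xI'[OF pU]])
        (use xM lU pU qU c2 in auto)
    then show ?thesis using s by (simp add: ac_simps)
  next
    assume c3: "p < q" "q < l"
    have "w (x p) (x l) + w (x q) (x (Suc l)) \<le> w (x p) (x (Suc l)) + w (x q) (x l)"
      by (rule wo_le(1)[OF wo xI'[OF pU] xI'[OF qU] xI'[OF lU(1)] xI'[OF lU(2)]])
        (use xM lU pU qU c3 in auto)
    then show ?thesis by (simp add: ac_simps)
  qed
qed

lemma pair_strict:
  assumes wo: "strictly_well_ordering I w" and l: "l \<in> LL" and p: "p \<in> RR - A" and q: "q \<in> RR \<inter> A"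
    and k: "kap l p < kap l q" and xl: "x l \<noteq> x (Suc l)"
    and eq: "w (x p) (x l) + w (x q) (x (Suc l)) = w (x q) (x l) + w (x p) (x (Suc l))"
    and fin: "w (x q) (x l) + w (x p) (x (Suc l)) \<noteq> \<infinity>"
  shows "x p = x q"
proof -
  have lU: "l \<in> UU" "Suc l \<in> UU" using L_props[OF l] by auto
  have pU: "p \<in> UU" and qU: "q \<in> UU" using p q by auto
  note s = wS[OF lU(1) pU] wS[OF lU(2) qU] wS[OF lU(1) qU] wS[OF lU(2) pU]
  show ?thesis
  proof (rule pair_cases[OF l p q k])
    assume c1: "Suc l < p" "p < q"
    have "x p = x q \<or> x l = x (Suc l)"
      by (rule swo_eq(1)[OF wo xI'[OF lU(1)] xI'[OF lU(2)] xI'[OF pU] xI'[OF qU]])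
        (use xM lU pU qU c1 eq fin s in auto)
    then show ?thesis using xl by simp
  next
    assume c2: "q < l" "Suc l < p"
    have "x l = x (Suc l) \<or> x q = x p"
      by (rule swo_eq(2)[OF wo xI'[OF qU] xI'[OF lU(1)] xI'[OF lU(2)] xI'[OF pU]])
        (use xM lU pU qU c2 eq fin s in \<open>auto simp: ac_simps\<close>)
    then show ?thesis using xl by auto
  next
    assume c3: "p < q" "q < l"
    have "x l = x (Suc l) \<or> x p = x q"
      by (rule swo_eq(1)[OF wo xI'[OF pU] xI'[OF qU] xI'[OF lU(1)] xI'[OF lU(2)]])
        (use xM lU pU qU c3 eq fin in \<open>auto simp: ac_simps\<close>)
    then show ?thesis using xl by auto
  qed
qed


lemma per_l:
  assumes wo: "well_ordering I w" and l: "l \<in> LL"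
  shows "(\<Sum>r\<in>RR\<inter>A. w (x r) (x (Suc l))) + (\<Sum>r\<in>RR-A. w (x r) (x l))
          \<le> (\<Sum>r\<in>RR\<inter>A. w (x r) (x l)) + (\<Sum>r\<in>RR-A. w (x r) (x (Suc l)))"
    and "strictly_well_ordering I w \<Longrightarrow> x l \<noteq> x (Suc l) \<Longrightarrow>
         (\<Sum>r\<in>RR\<inter>A. w (x r) (x (Suc l))) + (\<Sum>r\<in>RR-A. w (x r) (x l))
          = (\<Sum>r\<in>RR\<inter>A. w (x r) (x l)) + (\<Sum>r\<in>RR-A. w (x r) (x (Suc l))) \<Longrightarrow>
         (\<Sum>r\<in>RR\<inter>A. w (x r) (x l)) + (\<Sum>r\<in>RR-A. w (x r) (x (Suc l))) \<noteq> \<infinity> \<Longrightarrow>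
         image_mset x (mset_set (RR\<inter>A)) = image_mset x (mset_set (RR-A))"
proof -
  have lU: "l \<in> UU" "Suc l \<in> UU" using L_props[OF l] by auto
  have M: "sum (\<lambda>r. w (x r) (x (Suc l))) (RR\<inter>A) + sum (\<lambda>r. w (x r) (x l)) (RR-A)
      \<le> sum (\<lambda>r. w (x r) (x l)) (RR\<inter>A) + sum (\<lambda>r. w (x r) (x (Suc l))) (RR-A) \<and>
     ((\<forall>p q. p \<in> RR - A \<longrightarrow> q \<in> RR \<inter> A \<longrightarrow> kap l p < kap l q \<longrightarrow>
          w (x p) (x l) + w (x q) (x (Suc l)) = w (x q) (x l) + w (x p) (x (Suc l)) \<longrightarrow>
          w (x q) (x l) + w (x p) (x (Suc l)) \<noteq> \<infinity> \<longrightarrow> x p = x q) \<longrightarrow>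
      sum (\<lambda>r. w (x r) (x (Suc l))) (RR\<inter>A) + sum (\<lambda>r. w (x r) (x l)) (RR-A)
       = sum (\<lambda>r. w (x r) (x l)) (RR\<inter>A) + sum (\<lambda>r. w (x r) (x (Suc l))) (RR-A) \<longrightarrow>
      sum (\<lambda>r. w (x r) (x l)) (RR\<inter>A) + sum (\<lambda>r. w (x r) (x (Suc l))) (RR-A) \<noteq> \<infinity> \<longrightarrow>
      image_mset x (mset_set (RR\<inter>A)) = image_mset x (mset_set (RR-A)))"
  proof (rule match_lemma[of RR "kap l" A "\<lambda>r. w (x r) (x l)" "\<lambda>r. w (x r) (x (Suc l))" x])
    show "finite RR" by simp
    show "inj_on (kap l) RR" by (rule kap_inj)
    show "\<And>c. card ({r\<in>RR. c \<le> kap l r} - A) \<le> card ({r\<in>RR. c \<le> kap l r} \<inter> A)"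
      by (rule suffix[OF l])
    show "card (RR - A) = card (RR \<inter> A)" by (rule tot_RR)
    show "\<And>p q. p \<in> RR - A \<Longrightarrow> q \<in> RR \<inter> A \<Longrightarrow> kap l p < kap l q \<Longrightarrow>
        w (x p) (x l) + w (x q) (x (Suc l)) \<le> w (x q) (x l) + w (x p) (x (Suc l))"
      by (rule pair_ineq[OF wo l])
    show "\<And>p. p \<in> RR \<Longrightarrow> w (x p) (x l) \<noteq> -\<infinity> \<and> w (x p) (x (Suc l)) \<noteq> -\<infinity>"
      using wN lU by auto
  qed
  then show "(\<Sum>r\<in>RR\<inter>A. w (x r) (x (Suc l))) + (\<Sum>r\<in>RR-A. w (x r) (x l))
          \<le> (\<Sum>r\<in>RR\<inter>A. w (x r) (x l)) + (\<Sum>r\<in>RR-A. w (x r) (x (Suc l)))" by blast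
  assume swo: "strictly_well_ordering I w" and xl: "x l \<noteq> x (Suc l)"
    and e: "(\<Sum>r\<in>RR\<inter>A. w (x r) (x (Suc l))) + (\<Sum>r\<in>RR-A. w (x r) (x l))
          = (\<Sum>r\<in>RR\<inter>A. w (x r) (x l)) + (\<Sum>r\<in>RR-A. w (x r) (x (Suc l)))"
    and f: "(\<Sum>r\<in>RR\<inter>A. w (x r) (x l)) + (\<Sum>r\<in>RR-A. w (x r) (x (Suc l))) \<noteq> \<infinity>"
  have st: "\<forall>p q. p \<in> RR - A \<longrightarrow> q \<in> RR \<inter> A \<longrightarrow> kap l p < kap l q \<longrightarrow>
          w (x p) (x l) + w (x q) (x (Suc l)) = w (x q) (x l) + w (x p) (x (Suc l)) \<longrightarrow>
          w (x q) (x l) + w (x p) (x (Suc l)) \<noteq> \<infinity> \<longrightarrow> x p = x q"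
    using pair_strict[OF swo l _ _ _ xl] by blast
  show "image_mset x (mset_set (RR\<inter>A)) = image_mset x (mset_set (RR-A))"
    using M st e f by blast
qed

definition Off :: "nat set \<Rightarrow> ereal" where
  "Off X = (\<Sum>(p,q)\<in>offd X. w (x p) (x q))"

definition XS :: "nat set \<Rightarrow> nat set \<Rightarrow> ereal" where
  "XS X Y = (\<Sum>(p,q)\<in>X\<times>Y. w (x p) (x q))"

lemma finite_offd: "finite X \<Longrightarrow> finite (offd X)"
  by (rule finite_subset[of _ "X \<times> X"]) (auto simp: offd_def)

lemma Off_Un:
  assumes "finite X" "finite Y" "X \<inter> Y = {}"
  shows "Off (X \<union> Y) = Off X + Off Y + XS X Y + XS Y X"
proof -
  have e: "offd (X \<union> Y) = ((offd X \<union> offd Y) \<union> X \<times> Y) \<union> Y \<times> X"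
    using assms(3) by (auto simp: offd_def)
  have f: "finite (offd X)" "finite (offd Y)" "finite (X \<times> Y)" "finite (Y \<times> X)"
    using assms finite_offd by auto
  have d1: "offd X \<inter> offd Y = {}" using assms(3) by (auto simp: offd_def)
  have d2: "(offd X \<union> offd Y) \<inter> X \<times> Y = {}" using assms(3) by (auto simp: offd_def)
  have d3: "((offd X \<union> offd Y) \<union> X \<times> Y) \<inter> Y \<times> X = {}" using assms(3) by (auto simp: offd_def)
  show ?thesis unfolding Off_def XS_def e
    using f d1 d2 d3 by (simp add: sum.union_disjoint)
qed

lemma XS_as: "finite X \<Longrightarrow> finite Y \<Longrightarrow> XS X Y = (\<Sum>q\<in>Y. \<Sum>p\<in>X. w (x p) (x q))"
  unfolding XS_def by (simp add: sum.cartesian_product[symmetric] sum.swap[of _ X])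

lemma XS_sym:
  assumes "finite X" "finite Y" "X \<subseteq> UU" "Y \<subseteq> UU"
  shows "XS X Y = XS Y X"
proof -
  have "XS X Y = (\<Sum>q\<in>Y. \<Sum>p\<in>X. w (x p) (x q))" by (rule XS_as[OF assms(1,2)])
  also have "\<dots> = (\<Sum>q\<in>Y. \<Sum>p\<in>X. w (x q) (x p))"
    by (intro sum.cong refl) (use assms wS in blast)
  also have "\<dots> = XS Y X" unfolding XS_def by (simp add: sum.cartesian_product)
  finally show ?thesis .
qed


abbreviation "Ra \<equiv> RR \<inter> A"
abbreviation "Rn \<equiv> RR - A"
abbreviation "Lp \<equiv> Suc ` LL"

lemma sets:
  "A = Ra \<union> LL" "UU - A = Rn \<union> Lp" "BA n A = Ra \<union> Lp" "UU - BA n A = Rn \<union> LL"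
  "Ra \<inter> LL = {}" "Rn \<inter> Lp = {}" "Ra \<inter> Lp = {}" "Rn \<inter> LL = {}"
  using AU L_sub L'_sub BA_sub unfolding BA_eq by auto

lemma fins: "finite Ra" "finite Rn" "finite LL" "finite Lp" using finL by auto
lemma subs: "Ra \<subseteq> UU" "Rn \<subseteq> UU" "LL \<subseteq> UU" "Lp \<subseteq> UU" using L'_sub levels_eq by auto

definition "KK = Off Ra + Off LL + Off Rn + Off Lp"
definition "DA = XS Ra LL + XS Rn Lp"
definition "DB = XS Ra Lp + XS Rn LL"

lemma CA_eq: "cost w (subvec x A) + cost w (subvec x (UU - A)) = KK + DA + DA"
proof -
  have "cost w (subvec x A) = Off A" unfolding Off_def using AU by (intro cost_subvec) (simp add: finite_subset)
  also have "\<dots> = Off Ra + Off LL + XS Ra LL + XS LL Ra"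
    by (subst sets(1), rule Off_Un) (use fins sets in auto)
  finally have 1: "cost w (subvec x A) = Off Ra + Off LL + XS Ra LL + XS LL Ra" .
  have "cost w (subvec x (UU - A)) = Off (UU - A)" unfolding Off_def by (intro cost_subvec) simp
  also have "\<dots> = Off Rn + Off Lp + XS Rn Lp + XS Lp Rn"
    by (subst sets(2), rule Off_Un) (use fins sets in auto)
  finally have 2: "cost w (subvec x (UU - A)) = Off Rn + Off Lp + XS Rn Lp + XS Lp Rn" .
  have 3: "XS LL Ra = XS Ra LL" "XS Lp Rn = XS Rn Lp" using XS_sym fins subs by metis+
  show ?thesis unfolding 1 2 3 KK_def DA_def by (simp add: ac_simps)
qed

lemma CB_eq: "cost w (subvec x (BA n A)) + cost w (subvec x (UU - BA n A)) = KK + DB + DB"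
proof -
  have "cost w (subvec x (BA n A)) = Off (BA n A)" unfolding Off_def using BA_sub by (intro cost_subvec) (simp add: finite_subset)
  also have "\<dots> = Off Ra + Off Lp + XS Ra Lp + XS Lp Ra"
    by (subst sets(3), rule Off_Un) (use fins sets in auto)
  finally have 1: "cost w (subvec x (BA n A)) = Off Ra + Off Lp + XS Ra Lp + XS Lp Ra" .
  have "cost w (subvec x (UU - BA n A)) = Off (UU - BA n A)" unfolding Off_def by (intro cost_subvec) simp
  also have "\<dots> = Off Rn + Off LL + XS Rn LL + XS LL Rn"
    by (subst sets(4), rule Off_Un) (use fins sets in auto)
  finally have 2: "cost w (subvec x (UU - BA n A)) = Off Rn + Off LL + XS Rn LL + XS LL Rn" .
  have 3: "XS Lp Ra = XS Ra Lp" "XS LL Rn = XS Rn LL" using XS_sym fins subs by metis+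
  show ?thesis unfolding 1 2 3 KK_def DB_def by (simp add: ac_simps)
qed

lemma XS_Lp: "XS X Lp = (\<Sum>l\<in>LL. \<Sum>p\<in>X. w (x p) (x (Suc l)))" if "finite X"
proof -
  have "XS X Lp = (\<Sum>q\<in>Lp. \<Sum>p\<in>X. w (x p) (x q))" by (rule XS_as) (use that fins in auto)
  also have "\<dots> = (\<Sum>l\<in>LL. \<Sum>p\<in>X. w (x p) (x (Suc l)))" by (simp add: sum.reindex)
  finally show ?thesis .
qed

lemma DA_sum: "DA = (\<Sum>l\<in>LL. (\<Sum>r\<in>Ra. w (x r) (x l)) + (\<Sum>r\<in>Rn. w (x r) (x (Suc l))))"
  unfolding DA_def XS_Lp[OF fins(2)] XS_as[OF fins(1) fins(3)] by (simp add: sum.distrib)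

lemma DB_sum: "DB = (\<Sum>l\<in>LL. (\<Sum>r\<in>Ra. w (x r) (x (Suc l))) + (\<Sum>r\<in>Rn. w (x r) (x l)))"
  unfolding DB_def XS_Lp[OF fins(1)] XS_as[OF fins(2) fins(3)] by (simp add: sum.distrib)

lemma DB_le_DA: "well_ordering I w \<Longrightarrow> DB \<le> DA"
proof -
  assume wo: "well_ordering I w"
  show ?thesis unfolding DA_sum DB_sum
  proof (rule sum_mono)
    fix l assume "l \<in> LL"
    show "(\<Sum>r\<in>Ra. w (x r) (x (Suc l))) + (\<Sum>r\<in>Rn. w (x r) (x l))
        \<le> (\<Sum>r\<in>Ra. w (x r) (x l)) + (\<Sum>r\<in>Rn. w (x r) (x (Suc l)))"
      by (rule per_l(1)[OF wo \<open>l \<in> LL\<close>])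
  qed
qed

lemma ninf_all: "Off X \<noteq> -\<infinity>" "XS X Y \<noteq> -\<infinity>" if XU: "X \<subseteq> UU" and YU: "Y \<subseteq> UU"
proof -
  show "Off X \<noteq> -\<infinity>" unfolding Off_def
  proof (rule sum_ninf)
    fix pq assume "pq \<in> offd X"
    then obtain p q where "pq = (p,q)" "p \<in> X" "q \<in> X" by (auto simp: offd_def)
    then have "pq = (p,q)" "p \<in> UU" "q \<in> UU" using XU by blast+
    then show "(case pq of (p, q) \<Rightarrow> w (x p) (x q)) \<noteq> -\<infinity>" using wN by simp
  qed
  show "XS X Y \<noteq> -\<infinity>" unfolding XS_def
  proof (rule sum_ninf)
    fix pq assume "pq \<in> X \<times> Y"
    then obtain p q where "pq = (p,q)" "p \<in> X" "q \<in> Y" by auto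
    then have "pq = (p,q)" "p \<in> UU" "q \<in> UU" using XU YU by blast+
    then show "(case pq of (p, q) \<Rightarrow> w (x p) (x q)) \<noteq> -\<infinity>" using wN by simp
  qed
qed

lemma KK_ninf: "KK \<noteq> -\<infinity>" unfolding KK_def using ninf_all subs by simp
lemma DA_ninf: "DA \<noteq> -\<infinity>" unfolding DA_def using ninf_all subs by simp
lemma DB_ninf: "DB \<noteq> -\<infinity>" unfolding DB_def using ninf_all subs by simp

lemma ineq_main:
  assumes "well_ordering I w"
  shows "cost w (subvec x (BA n A)) + cost w (subvec x (UU - BA n A))
           \<le> cost w (subvec x A) + cost w (subvec x (UU - A))"
proof -
  have "KK + DB \<le> KK + DA" using DB_le_DA[OF assms] by (rule add_left_mono)
  then have "KK + DB + DB \<le> KK + DA + DA" using DB_le_DA[OF assms] by (rule add_mono)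
  then show ?thesis unfolding CA_eq CB_eq .
qed


lemma xU_split: "X \<subseteq> UU \<Longrightarrow> image_mset x (mset_set UU) = image_mset x (mset_set (UU - X)) + image_mset x (mset_set X)"
proof -
  assume X: "X \<subseteq> UU"
  have e: "UU = (UU - X) \<union> X" using X by auto
  have fX: "finite X" using X by (rule finite_subset) simp
  have "mset_set ((UU - X) \<union> X) = mset_set (UU - X) + mset_set X"
    by (rule mset_set_Union) (use fX in auto)
  then have "mset_set UU = mset_set (UU - X) + mset_set X" using e by simp
  then show ?thesis by simp
qed

lemma cost_pair_eq:
  assumes "image_mset x (mset_set X) = image_mset x (mset_set Y)"
  shows "cost w (subvec x X) = cost w (subvec x Y)"
  by (rule cost_mset) (simp add: mset_subvec assms)

lemma eq_main:
  assumes swo: "strictly_well_ordering I w"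
    and fin: "cost w (subvec x (BA n A)) + cost w (subvec x (UU - BA n A)) < \<infinity>"
  shows "cost w (subvec x (BA n A)) + cost w (subvec x (UU - BA n A))
            = cost w (subvec x A) + cost w (subvec x (UU - A))
          \<longleftrightarrow> image_mset x (mset_set A) = image_mset x (mset_set (BA n A))
              \<or> image_mset x (mset_set A) = image_mset x (mset_set (UU - BA n A))"
proof
  have wo: "well_ordering I w" using swo unfolding strictly_well_ordering_def by blast
  assume E: "cost w (subvec x (BA n A)) + cost w (subvec x (UU - BA n A))
            = cost w (subvec x A) + cost w (subvec x (UU - A))"
  have E2: "KK + DB + DB = KK + DA + DA" using E unfolding CA_eq CB_eq .
  have F2: "KK + DA + DA \<noteq> \<infinity>" using fin E2 unfolding CB_eq by simp
  have le1: "KK + DB \<le> KK + DA" using DB_le_DA[OF wo] by (rule add_left_mono)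
  have n1: "KK + DB \<noteq> -\<infinity>" using KK_ninf DB_ninf by simp
  have DBA: "DB = DA" using ereal_add_eq_cases[OF le1 DB_le_DA[OF wo] E2 F2 n1 DB_ninf] by blast
  have DAf: "DA \<noteq> \<infinity>" using F2 KK_ninf DA_ninf by simp
  define f where "f l = (\<Sum>r\<in>Ra. w (x r) (x (Suc l))) + (\<Sum>r\<in>Rn. w (x r) (x l))" for l
  define g where "g l = (\<Sum>r\<in>Ra. w (x r) (x l)) + (\<Sum>r\<in>Rn. w (x r) (x (Suc l)))" for l
  have DBf: "DB = sum f LL" unfolding DB_sum f_def ..
  have DAg: "DA = sum g LL" unfolding DA_sum g_def ..
  have fg: "\<forall>l\<in>LL. f l \<le> g l" unfolding f_def g_def using per_l(1)[OF wo] by blast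
  have fn: "\<forall>l\<in>LL. f l \<noteq> -\<infinity>"
  proof
    fix l assume l: "l \<in> LL"
    have lU: "l \<in> UU" "Suc l \<in> UU" using L_props[OF l] by auto
    have "(\<Sum>r\<in>Ra. w (x r) (x (Suc l))) \<noteq> -\<infinity>" by (rule sum_ninf) (use wN lU in auto)
    moreover have "(\<Sum>r\<in>Rn. w (x r) (x l)) \<noteq> -\<infinity>" by (rule sum_ninf) (use wN lU in auto)
    ultimately show "f l \<noteq> -\<infinity>" unfolding f_def by simp
  qed
  have s1: "sum f LL = sum g LL" using DBA DBf DAg by simp
  have s2: "sum g LL \<noteq> \<infinity>" using DAf DAg by simp
  have each: "\<forall>l\<in>LL. f l = g l \<and> g l \<noteq> \<infinity>"
    by (rule sum_eq_each[OF finL fg fn s1 s2])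
  have "mset_set (Ra \<union> LL) = mset_set Ra + mset_set LL"
    by (rule mset_set_Union) (use fins sets in auto)
  then have "mset_set A = mset_set Ra + mset_set LL" by (simp only: sets(1)[symmetric])
  then have sA: "image_mset x (mset_set A) = image_mset x (mset_set Ra) + image_mset x (mset_set LL)"
    by simp
  show "image_mset x (mset_set A) = image_mset x (mset_set (BA n A))
              \<or> image_mset x (mset_set A) = image_mset x (mset_set (UU - BA n A))"
  proof (cases "\<exists>l\<in>LL. x l \<noteq> x (Suc l)")
    case True
    then obtain l where l: "l \<in> LL" "x l \<noteq> x (Suc l)" by blast
    have "image_mset x (mset_set Ra) = image_mset x (mset_set Rn)"
      using per_l(2)[OF wo l(1) swo l(2)] each l(1) unfolding f_def g_def by blast
    moreover have "image_mset x (mset_set (UU - BA n A)) = image_mset x (mset_set Rn) + image_mset x (mset_set LL)"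
    proof -
      have "mset_set (Rn \<union> LL) = mset_set Rn + mset_set LL"
        by (rule mset_set_Union) (use fins sets in auto)
      then show ?thesis by (simp only: sets(4)[symmetric] image_mset_union)
    qed
    ultimately show ?thesis using sA by (simp only:) simp
  next
    case False
    have "image_mset x (mset_set Lp) = image_mset x (image_mset Suc (mset_set LL))"
      by (simp add: image_mset_mset_set)
    also have "\<dots> = image_mset (\<lambda>l. x (Suc l)) (mset_set LL)" by (simp add: multiset.map_comp comp_def)
    also have "\<dots> = image_mset x (mset_set LL)"
      by (rule image_mset_cong) (use False finL in auto)
    finally have "image_mset x (mset_set Lp) = image_mset x (mset_set LL)" .
    moreover have "image_mset x (mset_set (BA n A)) = image_mset x (mset_set Ra) + image_mset x (mset_set Lp)"
    proof -
      have "mset_set (Ra \<union> Lp) = mset_set Ra + mset_set Lp"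
        by (rule mset_set_Union) (use fins sets in auto)
      then show ?thesis by (simp only: sets(3)[symmetric] image_mset_union)
    qed
    ultimately show ?thesis using sA by (simp only:) simp
  qed
next
  assume H: "image_mset x (mset_set A) = image_mset x (mset_set (BA n A))
              \<or> image_mset x (mset_set A) = image_mset x (mset_set (UU - BA n A))"
  have uA: "image_mset x (mset_set UU) = image_mset x (mset_set (UU - A)) + image_mset x (mset_set A)"
    by (rule xU_split[OF AU])
  have uB: "image_mset x (mset_set UU) = image_mset x (mset_set (UU - BA n A)) + image_mset x (mset_set (BA n A))"
    by (rule xU_split[OF BA_sub])
  show "cost w (subvec x (BA n A)) + cost w (subvec x (UU - BA n A))
            = cost w (subvec x A) + cost w (subvec x (UU - A))"
  using H proof
    assume h: "image_mset x (mset_set A) = image_mset x (mset_set (BA n A))"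
    then have "image_mset x (mset_set (UU - A)) = image_mset x (mset_set (UU - BA n A))"
      using uA uB by simp
    then show ?thesis using cost_pair_eq h by metis
  next
    assume h: "image_mset x (mset_set A) = image_mset x (mset_set (UU - BA n A))"
    then have "image_mset x (mset_set (UU - A)) = image_mset x (mset_set (BA n A))"
      using uA uB by (simp add: add.commute)
    then show ?thesis using cost_pair_eq h by (metis add.commute)
  qed
qed

end

theorem lemma3p4:
  fixes I :: "real set" and w :: "real \<Rightarrow> real \<Rightarrow> ereal" and n :: nat and A :: "nat set"
  assumes "is_interval I"
    and "\<forall>a\<in>I. \<forall>b\<in>I. w a b \<noteq> -\<infinity>"
    and "well_ordering I w"
    and "A \<subseteq> {1..2*n}" and "card A = n"
    and "maxf n A \<ge> 1"
  shows "(osc n A \<ge> 2 \<longrightarrow> osc n (BA n A) < osc n A)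
    \<and> (\<forall>x :: nat \<Rightarrow> real. (\<forall>i\<in>{1..2*n}. x i \<in> I) \<and> (\<forall>i j. 1 \<le> i \<and> i \<le> j \<and> j \<le> 2*n \<longrightarrow> x i \<le> x j) \<longrightarrow>
         cost w (subvec x (BA n A)) + cost w (subvec x ({1..2*n} - BA n A))
           \<le> cost w (subvec x A) + cost w (subvec x ({1..2*n} - A)))
    \<and> (strictly_well_ordering I w \<longrightarrow>
       (\<forall>x :: nat \<Rightarrow> real. (\<forall>i\<in>{1..2*n}. x i \<in> I) \<and> (\<forall>i j. 1 \<le> i \<and> i \<le> j \<and> j \<le> 2*n \<longrightarrow> x i \<le> x j)
          \<and> cost w (subvec x (BA n A)) + cost w (subvec x ({1..2*n} - BA n A)) < \<infinity> \<longrightarrow>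
         (cost w (subvec x (BA n A)) + cost w (subvec x ({1..2*n} - BA n A))
            = cost w (subvec x A) + cost w (subvec x ({1..2*n} - A))
          \<longleftrightarrow> image_mset x (mset_set A) = image_mset x (mset_set (BA n A))
              \<or> image_mset x (mset_set A) = image_mset x (mset_set ({1..2*n} - BA n A)))))"
  proof -
  interpret lev n A using assms(4,5,6) by unfold_locales
  have wsym: "\<forall>a\<in>I. \<forall>b\<in>I. w a b = w b a" using assms(3) unfolding well_ordering_def by blast
  have P1: "osc n A \<ge> 2 \<longrightarrow> osc n (BA n A) < osc n A" by (rule osc_part)
  have P2: "\<forall>x :: nat \<Rightarrow> real. (\<forall>i\<in>{1..2*n}. x i \<in> I) \<and> (\<forall>i j. 1 \<le> i \<and> i \<le> j \<and> j \<le> 2*n \<longrightarrow> x i \<le> x j) \<longrightarrow>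
         cost w (subvec x (BA n A)) + cost w (subvec x ({1..2*n} - BA n A))
           \<le> cost w (subvec x A) + cost w (subvec x ({1..2*n} - A))"
  proof (intro allI impI)
    fix x :: "nat \<Rightarrow> real"
    assume H: "(\<forall>i\<in>{1..2*n}. x i \<in> I) \<and> (\<forall>i j. 1 \<le> i \<and> i \<le> j \<and> j \<le> 2*n \<longrightarrow> x i \<le> x j)"
    interpret cst n A I w x using wsym assms(2) H by unfold_locales auto
    show "cost w (subvec x (BA n A)) + cost w (subvec x ({1..2*n} - BA n A))
           \<le> cost w (subvec x A) + cost w (subvec x ({1..2*n} - A))"
      by (rule ineq_main[OF assms(3)])
  qed
  have P3: "strictly_well_ordering I w \<longrightarrow>
       (\<forall>x :: nat \<Rightarrow> real. (\<forall>i\<in>{1..2*n}. x i \<in> I) \<and> (\<forall>i j. 1 \<le> i \<and> i \<le> j \<and> j \<le> 2*n \<longrightarrow> x i \<le> x j)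
          \<and> cost w (subvec x (BA n A)) + cost w (subvec x ({1..2*n} - BA n A)) < \<infinity> \<longrightarrow>
         (cost w (subvec x (BA n A)) + cost w (subvec x ({1..2*n} - BA n A))
            = cost w (subvec x A) + cost w (subvec x ({1..2*n} - A))
          \<longleftrightarrow> image_mset x (mset_set A) = image_mset x (mset_set (BA n A))
              \<or> image_mset x (mset_set A) = image_mset x (mset_set ({1..2*n} - BA n A))))"
  proof (intro allI impI)
    fix x :: "nat \<Rightarrow> real"
    assume swo: "strictly_well_ordering I w"
    assume H: "(\<forall>i\<in>{1..2*n}. x i \<in> I) \<and> (\<forall>i j. 1 \<le> i \<and> i \<le> j \<and> j \<le> 2*n \<longrightarrow> x i \<le> x j)
          \<and> cost w (subvec x (BA n A)) + cost w (subvec x ({1..2*n} - BA n A)) < \<infinity>"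
    interpret cst n A I w x using wsym assms(2) H by unfold_locales auto
    show "cost w (subvec x (BA n A)) + cost w (subvec x ({1..2*n} - BA n A))
            = cost w (subvec x A) + cost w (subvec x ({1..2*n} - A))
          \<longleftrightarrow> image_mset x (mset_set A) = image_mset x (mset_set (BA n A))
              \<or> image_mset x (mset_set A) = image_mset x (mset_set ({1..2*n} - BA n A))"
      by (rule eq_main[OF swo]) (use H in blast)
  qed
  show ?thesis using P1 P2 P3 by blast
qed

end
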